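(* Let $k\ge 1$ and $\ell$ be integers with $0\le \ell\le 2k-1$. Let $G=(V,E)$ be a multigraph (loops allowed) on $n$ vertices with $kn-\ell$ edges. The following statements are equivalent: (1) $G$ is $(k,0)$-sparse; (2) there is some set of $\ell$ edges which, when added to $G$, results in a $k$-map.
   Context: Graphs are multigraphs, possibly with loops. A graph is $(k,\ell)$-sparse if no subset $V'$ of $n'$ vertices spans more than $kn'-\ell$ edges (edges with both endpoints in $V'$). A map is a graph admitting an orientation of its edges such that every vertex has out-degree exactly $1$ (a loop contributes out-degree $1$ to its vertex). A $k$-map is a graph whose edge set can be partitioned into $k$ edge-disjoint maps on the same vertex set. *)

theory Defs
  imports Main "HOL-Library.Uprod"
begin

text \<open>A multigraph (loops allowed) is given by a vertex set V, an edge index set E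
  and an endpoint map ends assigning to each edge an unordered pair of vertices
  (a loop at v is Upair v v).\<close>

definition multigraph :: "'v set \<Rightarrow> 'e set \<Rightarrow> ('e \<Rightarrow> 'v uprod) \<Rightarrow> bool" where
  "multigraph V E ends \<longleftrightarrow> finite V \<and> finite E \<and> (\<forall>e\<in>E. set_uprod (ends e) \<subseteq> V)"

definition spanned :: "'e set \<Rightarrow> ('e \<Rightarrow> 'v uprod) \<Rightarrow> 'v set \<Rightarrow> nat" where
  "spanned E ends V' = card {e\<in>E. set_uprod (ends e) \<subseteq> V'}"

definition sparse :: "nat \<Rightarrow> int \<Rightarrow> 'v set \<Rightarrow> 'e set \<Rightarrow> ('e \<Rightarrow> 'v uprod) \<Rightarrow> bool" where
  "sparse k l V E ends \<longleftrightarrow>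
     (\<forall>V'. V' \<subseteq> V \<and> V' \<noteq> {} \<longrightarrow> int (spanned E ends V') \<le> int k * int (card V') - l)"

text \<open>A map: an orientation (choice of tail among the endpoints of each edge)
  such that every vertex has out-degree exactly 1; a loop at v is an out-edge of v.\<close>
definition is_map :: "'v set \<Rightarrow> 'e set \<Rightarrow> ('e \<Rightarrow> 'v uprod) \<Rightarrow> bool" where
  "is_map V E ends \<longleftrightarrow>
     (\<exists>tail :: 'e \<Rightarrow> 'v. (\<forall>e\<in>E. tail e \<in> set_uprod (ends e)) \<and>
        (\<forall>v\<in>V. card {e\<in>E. tail e = v} = 1))"

definition is_kmap :: "nat \<Rightarrow> 'v set \<Rightarrow> 'e set \<Rightarrow> ('e \<Rightarrow> 'v uprod) \<Rightarrow> bool" where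
  "is_kmap k V E ends \<longleftrightarrow>
     (\<exists>col :: 'e \<Rightarrow> nat. (\<forall>e\<in>E. col e < k) \<and>
        (\<forall>i<k. is_map V {e\<in>E. col e = i} ends))"

end

theory Submission
  imports Defs
begin


lemma card_fibers:
  assumes "finite A" "finite I" "\<forall>x\<in>A. f x \<in> I"
  shows "card A = (\<Sum>i\<in>I. card {x\<in>A. f x = i})"
proof -
  have "A = (\<Union>i\<in>I. {x\<in>A. f x = i})" using assms(3) by auto
  hence "card A = card (\<Union>i\<in>I. {x\<in>A. f x = i})" by simp
  also have "\<dots> = (\<Sum>i\<in>I. card {x\<in>A. f x = i})"
    by (rule card_UN_disjoint) (use assms in auto)
  finally show ?thesis .
qed

definition outdeg :: "'e set \<Rightarrow> ('e \<Rightarrow> 'v \<times> 'v) \<Rightarrow> 'v \<Rightarrow> nat" where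
  "outdeg E r v = card {e\<in>E. fst (r e) = v}"

definition Phi :: "nat \<Rightarrow> 'v set \<Rightarrow> 'e set \<Rightarrow> ('e \<Rightarrow> 'v \<times> 'v) \<Rightarrow> nat" where
  "Phi k V E r = (\<Sum>v\<in>V. outdeg E r v - k)"

definition orient :: "'e set \<Rightarrow> ('e \<Rightarrow> 'v uprod) \<Rightarrow> ('e \<Rightarrow> 'v \<times> 'v) \<Rightarrow> bool" where
  "orient E ends r \<longleftrightarrow> (\<forall>e\<in>E. ends e = Upair (fst (r e)) (snd (r e)))"

fun reach :: "('e \<Rightarrow> 'v \<times> 'v) \<Rightarrow> 'e set \<Rightarrow> 'v \<Rightarrow> nat \<Rightarrow> 'v set" where
  "reach r E a 0 = {a}"
| "reach r E a (Suc d) = reach r E a d \<union> {snd (r e) |e. e \<in> E \<and> fst (r e) \<in> reach r E a d}"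

lemma reach_mono: "j \<le> d \<Longrightarrow> reach r E a j \<subseteq> reach r E a d"
  by (induction d) (auto simp: le_Suc_eq)

lemma reach_swap:
  assumes "\<forall>e'\<in>E. e' \<noteq> e \<longrightarrow> r' e' = r e'" "e \<in> E" "snd (r e) \<notin> reach r E a d" "j \<le> d"
  shows "reach r E a j \<subseteq> reach r' E a j"
  using assms(4)
proof (induction j)
  case 0 then show ?case by simp
next
  case (Suc j)
  have IH: "reach r E a j \<subseteq> reach r' E a j" using Suc by simp
  have sub: "reach r E a (Suc j) \<subseteq> reach r E a d" by (rule reach_mono) (use Suc.prems in simp)
  show ?case
  proof
    fix y assume y: "y \<in> reach r E a (Suc j)"
    show "y \<in> reach r' E a (Suc j)"
    proof (cases "y \<in> reach r E a j")
      case True then show ?thesis using IH by auto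
    next
      case False
      then obtain e'' where e'': "e'' \<in> E" "fst (r e'') \<in> reach r E a j" "y = snd (r e'')"
        using y by auto
      have "e'' \<noteq> e"
      proof
        assume "e'' = e"
        then have "snd (r e) \<in> reach r E a (Suc j)" using e'' by auto
        then show False using sub assms(3) by blast
      qed
      then have "r' e'' = r e''" using assms(1) e''(1) by blast
      moreover have "fst (r e'') \<in> reach r' E a j" using IH e''(2) by blast
      ultimately show ?thesis using e'' by force
    qed
  qed
qed

lemma outdeg_swap:
  assumes "finite E" "e \<in> E" "fst (r e) \<noteq> snd (r e)"
  defines "r' \<equiv> r(e := prod.swap (r e))"
  shows "outdeg E r (fst (r e)) \<ge> 1"
    "outdeg E r' (fst (r e)) = outdeg E r (fst (r e)) - 1"
    "outdeg E r' (snd (r e)) = outdeg E r (snd (r e)) + 1"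
    "v \<noteq> fst (r e) \<Longrightarrow> v \<noteq> snd (r e) \<Longrightarrow> outdeg E r' v = outdeg E r v"
proof -
  let ?x = "fst (r e)" and ?u = "snd (r e)"
  have "e \<in> {e'\<in>E. fst (r e') = ?x}" using assms by auto
  then show "outdeg E r ?x \<ge> 1" unfolding outdeg_def using assms(1)
    by (metis (no_types, lifting) One_nat_def Suc_leI card_gt_0_iff empty_iff finite_subset mem_Collect_eq subsetI)
  have "{e'\<in>E. fst (r' e') = ?x} = {e'\<in>E. fst (r e') = ?x} - {e}"
    using assms by (auto simp: r'_def)
  then show "outdeg E r' ?x = outdeg E r ?x - 1" unfolding outdeg_def
    using assms(2) by (simp add: card_Diff_singleton_if)
  have "{e'\<in>E. fst (r' e') = ?u} = insert e {e'\<in>E. fst (r e') = ?u}"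
    using assms by (auto simp: r'_def)
  moreover have "e \<notin> {e'\<in>E. fst (r e') = ?u}" using assms by auto
  ultimately show "outdeg E r' ?u = outdeg E r ?u + 1" unfolding outdeg_def
    using assms(1) by simp
  assume "v \<noteq> ?x" "v \<noteq> ?u"
  then have "{e'\<in>E. fst (r' e') = v} = {e'\<in>E. fst (r e') = v}"
    by (auto simp: r'_def)
  then show "outdeg E r' v = outdeg E r v" unfolding outdeg_def by simp
qed

lemma sum_two_change:
  fixes h h' :: "'v \<Rightarrow> nat"
  assumes "finite V" "x \<in> V" "u \<in> V" "x \<noteq> u" "\<forall>v\<in>V. v \<noteq> x \<longrightarrow> v \<noteq> u \<longrightarrow> h' v = h v"
  shows "sum h V = h x + h u + sum h (V - {x} - {u})"
    "sum h' V = h' x + h' u + sum h (V - {x} - {u})"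
proof -
  show "sum h V = h x + h u + sum h (V - {x} - {u})"
    using assms by (simp add: sum.remove[of V x] sum.remove[of "V - {x}" u])
  have "sum h' (V - {x} - {u}) = sum h (V - {x} - {u})"
    using assms by (intro sum.cong) auto
  then show "sum h' V = h' x + h' u + sum h (V - {x} - {u})"
    using assms by (simp add: sum.remove[of V x] sum.remove[of "V - {x}" u])
qed



lemma orient_V:
  assumes "multigraph V E ends" "orient E ends r" "e \<in> E"
  shows "fst (r e) \<in> V" "snd (r e) \<in> V"
  using assms unfolding multigraph_def orient_def by (metis insert_subset set_uprod_simps)+

lemma improve:
  assumes mg: "multigraph V E ends"
  shows "orient E ends r \<Longrightarrow> outdeg E r a > k \<Longrightarrow> u \<in> reach r E a d \<Longrightarrow> outdeg E r u < k
    \<Longrightarrow> \<exists>r'. orient E ends r' \<and> Phi k V E r' < Phi k V E r"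
proof (induction d arbitrary: r u)
  case 0
  then show ?case by simp
next
  case (Suc d)
  show ?case
  proof (cases "u \<in> reach r E a d")
    case True
    then show ?thesis using Suc by blast
  next
    case False
    note nR = False
    then obtain e where e: "e \<in> E" "fst (r e) \<in> reach r E a d" "snd (r e) = u"
      using Suc.prems(3) by auto
    define x where "x = fst (r e)"
    have xu: "x \<noteq> u" using e False x_def by auto
    have fin: "finite E" "finite V" using mg unfolding multigraph_def by auto
    have xV: "x \<in> V" and uV: "u \<in> V" using orient_V[OF mg Suc.prems(1) e(1)] e x_def by auto
    define r' where "r' = r(e := prod.swap (r e))"
    have or': "orient E ends r'" using Suc.prems(1) unfolding orient_def r'_def
      by auto
    have d1: "outdeg E r x \<ge> 1" and d2: "outdeg E r' x = outdeg E r x - 1"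
      and d3: "outdeg E r' u = outdeg E r u + 1"
      and d4: "\<And>v. v \<noteq> x \<Longrightarrow> v \<noteq> u \<Longrightarrow> outdeg E r' v = outdeg E r v"
      using outdeg_swap[OF fin(1) e(1), of] xu e(3) unfolding x_def r'_def by auto
    let ?h = "\<lambda>v. outdeg E r v - k" and ?h' = "\<lambda>v. outdeg E r' v - k"
    have S: "sum ?h V = ?h x + ?h u + sum ?h (V - {x} - {u})"
      "sum ?h' V = ?h' x + ?h' u + sum ?h (V - {x} - {u})"
      using sum_two_change[of V x u ?h' ?h] fin xV uV xu d4 by auto
    have hu: "?h' u = 0" "?h u = 0" using d3 Suc.prems(4) by auto
    show ?thesis
    proof (cases "outdeg E r x > k")
      case True
      then have "?h' x < ?h x" using d2 by auto
      then have "Phi k V E r' < Phi k V E r" unfolding Phi_def using S hu by simp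
      then show ?thesis using or' by blast
    next
      case False
      then have "?h' x = ?h x" using d2 by auto
      then have eqP: "Phi k V E r' = Phi k V E r" unfolding Phi_def using S hu by simp
      have xa: "x \<noteq> a" using False Suc.prems(2) by auto
      have ua: "u \<noteq> a" using Suc.prems(2,4) by auto
      have a': "outdeg E r' a > k" using d4[of a] xa ua Suc.prems(2) by simp
      have x': "outdeg E r' x < k" using d1 d2 False by simp
      have "reach r E a d \<subseteq> reach r' E a d"
        by (rule reach_swap[of E e r' r a d d]) (use e nR r'_def in auto)
      then have "x \<in> reach r' E a d" using e x_def by auto
      then show ?thesis using Suc.IH[OF or' a' _ x'] eqP by auto
    qed
  qed
qed

lemma no_escape:
  assumes mg: "multigraph V E ends" and sp: "sparse k 0 V E ends" and o: "orient E ends r"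
    and aV: "a \<in> V" and ak: "outdeg E r a > k"
  shows "\<exists>d u. u \<in> reach r E a d \<and> outdeg E r u < k"
proof (rule ccontr)
  assume ne: "\<not> ?thesis"
  define R where "R = (\<Union>d. reach r E a d)"
  have fin: "finite E" "finite V" using mg unfolding multigraph_def by auto
  have RV: "reach r E a d \<subseteq> V" for d
    by (induction d) (use aV orient_V[OF mg o] in auto)
  then have RV': "R \<subseteq> V" unfolding R_def by auto
  then have finR: "finite R" using fin finite_subset by auto
  have "a \<in> reach r E a 0" by simp
  then have aR: "a \<in> R" unfolding R_def by blast
  have closed: "snd (r e) \<in> R" if he: "e \<in> E" "fst (r e) \<in> R" for e
  proof -
    obtain d where "fst (r e) \<in> reach r E a d" using he(2) unfolding R_def by blast
    then have "snd (r e) \<in> reach r E a (Suc d)" using he by auto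
    then show ?thesis unfolding R_def by blast
  qed
  have geq: "\<forall>u\<in>R. k \<le> outdeg E r u"
  proof
    fix u assume "u \<in> R"
    then obtain d where "u \<in> reach r E a d" unfolding R_def by blast
    then show "k \<le> outdeg E r u" using ne by (meson not_le)
  qed
  have "(\<Sum>u\<in>R. k) < (\<Sum>u\<in>R. outdeg E r u)"
    by (rule sum_strict_mono_ex1) (use finR geq aR ak in auto)
  also have "(\<Sum>u\<in>R. outdeg E r u) = card {e\<in>E. fst (r e) \<in> R}"
  proof -
    have "card {e\<in>E. fst (r e) \<in> R} = (\<Sum>u\<in>R. card {x\<in>{e\<in>E. fst (r e) \<in> R}. fst (r x) = u})"
      by (rule card_fibers) (use fin finR in auto)
    also have "\<dots> = (\<Sum>u\<in>R. outdeg E r u)"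
      unfolding outdeg_def by (rule sum.cong) (auto intro!: arg_cong[where f=card])
    finally show ?thesis by simp
  qed
  also have "\<dots> \<le> spanned E ends R"
    unfolding spanned_def
  proof (rule card_mono)
    show "finite {e \<in> E. set_uprod (ends e) \<subseteq> R}" using fin by auto
    show "{e \<in> E. fst (r e) \<in> R} \<subseteq> {e \<in> E. set_uprod (ends e) \<subseteq> R}"
      using closed o unfolding orient_def by auto
  qed
  finally have "k * card R < spanned E ends R" by (simp add: mult.commute)
  moreover have "int (spanned E ends R) \<le> int k * int (card R) - 0"
    using sp RV' aR unfolding sparse_def by blast
  ultimately show False by (metis diff_zero of_nat_less_iff of_nat_mult not_le)
qed

lemma hakimi:
  assumes mg: "multigraph V E ends" and sp: "sparse k 0 V E ends"
  shows "\<exists>r. orient E ends r \<and> (\<forall>v\<in>V. outdeg E r v \<le> k)"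
proof -
  define r0 where "r0 = (\<lambda>e. SOME p. ends e = Upair (fst p) (snd p))"
  have "orient E ends r0" unfolding orient_def r0_def
  proof
    fix e
    obtain x y where "ends e = Upair x y" by (cases "ends e") auto
    then have "\<exists>p. ends e = Upair (fst p) (snd p)" by (metis fst_conv snd_conv)
    then show "ends e = Upair (fst (SOME p. ends e = Upair (fst p) (snd p))) (snd (SOME p. ends e = Upair (fst p) (snd p)))"
      by (rule someI_ex)
  qed
  then have ex: "\<exists>n r. orient E ends r \<and> Phi k V E r = n" by blast
  obtain n where n: "\<exists>r. orient E ends r \<and> Phi k V E r = n"
    and least: "\<And>m. m < n \<Longrightarrow> \<not> (\<exists>r. orient E ends r \<and> Phi k V E r = m)"
    using exists_least_iff[THEN iffD1, OF ex] by blast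
  obtain r where r: "orient E ends r" "Phi k V E r = n" using n by blast
  have "\<forall>v\<in>V. outdeg E r v \<le> k"
  proof (rule ccontr)
    assume "\<not> ?thesis"
    then obtain a where a: "a \<in> V" "outdeg E r a > k" by (auto simp: not_le)
    obtain d u where "u \<in> reach r E a d" "outdeg E r u < k"
      using no_escape[OF mg sp r(1) a] by blast
    then obtain r' where "orient E ends r'" "Phi k V E r' < Phi k V E r"
      using improve[OF mg r(1) a(2)] by blast
    then show False using least r(2) by blast
  qed
  then show ?thesis using r by blast
qed



lemma kmap_sparse:
  fixes k l :: nat and V :: "'v set" and E :: "'e set" and ends :: "'e \<Rightarrow> 'v uprod"
    and g :: "nat \<Rightarrow> 'v uprod"
  assumes mg: "multigraph V E ends"
    and km: "is_kmap k V (Inl ` E \<union> Inr ` {..<l}) (case_sum ends g)"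
  shows "sparse k 0 V E ends"
proof -
  define X where "X = Inl ` E \<union> (Inr ` {..<l} :: ('e + nat) set)"
  define ends' where "ends' = case_sum ends g"
  have finX: "finite X" using mg unfolding X_def multigraph_def by auto
  obtain col where col: "\<forall>x\<in>X. col x < k" "\<forall>i<k. is_map V {x\<in>X. col x = i} ends'"
    using km unfolding is_kmap_def X_def ends'_def by blast
  have ex: "\<forall>i. \<exists>t. i < k \<longrightarrow> (\<forall>e\<in>{x\<in>X. col x = i}. t e \<in> set_uprod (ends' e)) \<and>
      (\<forall>v\<in>V. card {e\<in>{x\<in>X. col x = i}. t e = v} = 1)"
    using col(2) unfolding is_map_def by blast
  obtain T where T: "\<And>i. i < k \<Longrightarrow> (\<forall>e\<in>{x\<in>X. col x = i}. T i e \<in> set_uprod (ends' e)) \<and>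
      (\<forall>v\<in>V. card {e\<in>{x\<in>X. col x = i}. T i e = v} = 1)"
    using choice[OF ex] by blast
  show ?thesis unfolding sparse_def
  proof (intro allI impI)
    fix V' assume V': "V' \<subseteq> V \<and> V' \<noteq> {}"
    have finV': "finite V'" using V' mg finite_subset unfolding multigraph_def by auto
    let ?A = "{x\<in>X. T (col x) x \<in> V'}"
    have "spanned E ends V' = card (Inl ` {e\<in>E. set_uprod (ends e) \<subseteq> V'} :: ('e + nat) set)"
      unfolding spanned_def by (simp add: card_image)
    also have "\<dots> \<le> card ?A"
    proof (rule card_mono)
      show "finite ?A" using finX by auto
      show "Inl ` {e\<in>E. set_uprod (ends e) \<subseteq> V'} \<subseteq> ?A"
      proof
        fix x :: "'e + nat" assume "x \<in> Inl ` {e\<in>E. set_uprod (ends e) \<subseteq> V'}"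
        then obtain e where e: "x = Inl e" "e \<in> E" "set_uprod (ends e) \<subseteq> V'" by auto
        have xX: "x \<in> X" using e unfolding X_def by auto
        then have "T (col x) x \<in> set_uprod (ends' x)" using T[of "col x"] col(1) by auto
        then show "x \<in> ?A" using e xX unfolding ends'_def by auto
      qed
    qed
    also have "card ?A = (\<Sum>i\<in>{..<k}. card {y\<in>?A. col y = i})"
      by (rule card_fibers) (use finX col(1) in auto)
    also have "\<dots> = (\<Sum>i\<in>{..<k}. card V')"
    proof (rule sum.cong)
      fix i assume i: "i \<in> {..<k}"
      let ?Xi = "{x\<in>X. col x = i}"
      have eqs: "{y\<in>?A. col y = i} = {y\<in>?Xi. T i y \<in> V'}" by auto
      have "card {y\<in>?Xi. T i y \<in> V'} = (\<Sum>v\<in>V'. card {y\<in>{y\<in>?Xi. T i y \<in> V'}. T i y = v})"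
        by (rule card_fibers) (use finX finV' in auto)
      also have "\<dots> = (\<Sum>v\<in>V'. 1)"
      proof (rule sum.cong)
        fix v assume v: "v \<in> V'"
        have "{y\<in>{y\<in>?Xi. T i y \<in> V'}. T i y = v} = {e\<in>?Xi. T i e = v}" using v by auto
        then show "card {y\<in>{y\<in>?Xi. T i y \<in> V'}. T i y = v} = 1"
          using T[of i] i v V' by auto
      qed simp
      finally show "card {y\<in>?A. col y = i} = card V'" using eqs by simp
    qed simp
    finally have "spanned E ends V' \<le> k * card V'" by simp
    then show "int (spanned E ends V') \<le> int k * int (card V') - 0"
      by (metis diff_zero of_nat_le_iff of_nat_mult)
  qed
qed



lemma sparse_kmap:
  fixes k l :: nat and V :: "'v set" and E :: "'e set" and ends :: "'e \<Rightarrow> 'v uprod"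
  assumes mg: "multigraph V E ends" and sp: "sparse k 0 V E ends"
    and cnt: "int (card E) = int k * int (card V) - int l"
  shows "\<exists>g :: nat \<Rightarrow> 'v uprod. (\<forall>i<l. set_uprod (g i) \<subseteq> V) \<and>
       is_kmap k V (Inl ` E \<union> Inr ` {..<l}) (case_sum ends g)"
proof -
  obtain r where r: "orient E ends r" "\<forall>v\<in>V. outdeg E r v \<le> k"
    using hakimi[OF mg sp] by blast
  have fin: "finite E" "finite V" using mg unfolding multigraph_def by auto
  have rV: "\<And>e. e \<in> E \<Longrightarrow> fst (r e) \<in> V" using orient_V[OF mg r(1)] by blast
  have sumdeg: "card E = (\<Sum>v\<in>V. outdeg E r v)"
    unfolding outdeg_def by (rule card_fibers) (use fin rV in auto)
  define m where "m v = k - outdeg E r v" for v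
  define S where "S = Sigma V (\<lambda>v. {..<m v})"
  have finS: "finite S" using fin unfolding S_def by auto
  have "card S = (\<Sum>v\<in>V. m v)" unfolding S_def using fin by simp
  also have "\<dots> = (\<Sum>v\<in>V. k) - (\<Sum>v\<in>V. outdeg E r v)"
    unfolding m_def by (rule sum_subtractf_nat) (use r(2) in auto)
  also have "\<dots> = k * card V - card E" using sumdeg by (simp add: mult.commute)
  also have "\<dots> = l"
  proof -
    have "int (k * card V) = int (card E + l)" using cnt by simp
    then have "k * card V = card E + l" by (simp only: of_nat_eq_iff)
    then show ?thesis by simp
  qed
  finally have cS: "card S = l" .
  obtain h where h: "bij_betw h {0..<l} S" using ex_bij_betw_nat_finite[OF finS] cS by blast
  have hS: "\<And>i. i < l \<Longrightarrow> h i \<in> S" using h unfolding bij_betw_def by auto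
  have hV: "\<And>i. i < l \<Longrightarrow> fst (h i) \<in> V" using hS unfolding S_def by (metis SigmaE fst_conv)
  define g where "g i = Upair (fst (h i)) (fst (h i))" for i
  define X where "X = Inl ` E \<union> (Inr ` {..<l} :: ('e + nat) set)"
  define tl where "tl = case_sum (\<lambda>e. fst (r e)) (\<lambda>i. fst (h i))"
  define out where "out v = {x\<in>X. tl x = v}" for v
  have finX: "finite X" using fin unfolding X_def by auto
  have tlV: "\<And>x. x \<in> X \<Longrightarrow> tl x \<in> V" unfolding X_def tl_def using rV hV by auto
  have cout: "card (out v) = k" if v: "v \<in> V" for v
  proof -
    have "out v = Inl ` {e\<in>E. fst (r e) = v} \<union> Inr ` {i\<in>{..<l}. fst (h i) = v}"
      unfolding out_def X_def tl_def by auto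
    moreover have "card (Inl ` {e\<in>E. fst (r e) = v} \<union> Inr ` {i\<in>{..<l}. fst (h i) = v} :: ('e + nat) set) = card (Inl ` {e\<in>E. fst (r e) = v} :: ('e + nat) set)
        + card (Inr ` {i\<in>{..<l}. fst (h i) = v} :: ('e + nat) set)"
      using fin by (intro card_Un_disjoint) auto
    ultimately have "card (out v) = card (Inl ` {e\<in>E. fst (r e) = v} :: ('e + nat) set)
        + card (Inr ` {i\<in>{..<l}. fst (h i) = v} :: ('e + nat) set)" by simp
    also have "\<dots> = outdeg E r v + card {i\<in>{..<l}. fst (h i) = v}"
      unfolding outdeg_def by (simp add: card_image)
    also have "card {i\<in>{..<l}. fst (h i) = v} = m v"
    proof -
      have inj: "inj_on h {i\<in>{..<l}. fst (h i) = v}"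
        using h unfolding bij_betw_def by (auto intro: inj_on_subset)
      have "h ` {i\<in>{..<l}. fst (h i) = v} = {p\<in>S. fst p = v}"
      proof
        show "h ` {i\<in>{..<l}. fst (h i) = v} \<subseteq> {p\<in>S. fst p = v}" using hS by auto
        show "{p\<in>S. fst p = v} \<subseteq> h ` {i\<in>{..<l}. fst (h i) = v}"
        proof
          fix p assume p: "p \<in> {p\<in>S. fst p = v}"
          then obtain i where "i \<in> {0..<l}" "h i = p" using h unfolding bij_betw_def by force
          then show "p \<in> h ` {i\<in>{..<l}. fst (h i) = v}" using p by auto
        qed
      qed
      moreover have "{p\<in>S. fst p = v} = {v} \<times> {..<m v}" unfolding S_def using v by auto
      ultimately show ?thesis using card_image[OF inj] by simp
    qed
    finally show ?thesis using r(2) v unfolding m_def by simp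
  qed
  have finout: "finite (out v)" for v using finX unfolding out_def by auto
  have exc: "\<exists>c. bij_betw c (out v) {..<k}" if "v \<in> V" for v
    by (rule finite_same_card_bij) (use finout cout that in auto)
  define c where "c v = (SOME c. bij_betw c (out v) {..<k})" for v
  have cb: "bij_betw (c v) (out v) {..<k}" if "v \<in> V" for v
    unfolding c_def using someI_ex[OF exc[OF that]] .
  define col where "col x = c (tl x) x" for x
  have inout: "x \<in> out (tl x)" if "x \<in> X" for x unfolding out_def using that by auto
  show ?thesis
  proof (intro exI conjI)
    show "\<forall>i<l. set_uprod (g i) \<subseteq> V" unfolding g_def using hV by auto
    show "is_kmap k V (Inl ` E \<union> Inr ` {..<l}) (case_sum ends g)"
      unfolding is_kmap_def X_def[symmetric]
    proof (intro exI conjI allI impI ballI)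
      fix x assume x: "x \<in> X"
      show "col x < k" using cb[OF tlV[OF x]] inout[OF x] unfolding col_def bij_betw_def by auto
    next
      fix i assume i: "i < k"
      show "is_map V {x\<in>X. col x = i} (case_sum ends g)"
        unfolding is_map_def
      proof (intro exI conjI ballI)
        fix x assume x: "x \<in> {x\<in>X. col x = i}"
        then show "tl x \<in> set_uprod (case_sum ends g x)"
          using r(1) unfolding X_def tl_def g_def orient_def by auto
      next
        fix v assume v: "v \<in> V"
        have eq: "{x\<in>{x\<in>X. col x = i}. tl x = v} = {x\<in>out v. c v x = i}"
          unfolding out_def col_def by auto
        obtain x0 where x0: "x0 \<in> out v" "c v x0 = i"
          using cb[OF v] i unfolding bij_betw_def by (metis imageE lessThan_iff)
        have "{x\<in>out v. c v x = i} = {x0}"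
          using x0 cb[OF v] unfolding bij_betw_def inj_on_def by auto
        then show "card {x\<in>{x\<in>X. col x = i}. tl x = v} = 1" using eq by simp
      qed
    qed
  qed
qed

theorem theorem2:
  fixes k l :: nat and V :: "'v set" and E :: "'e set" and ends :: "'e \<Rightarrow> 'v uprod"
  assumes "k \<ge> 1" and "l \<le> 2 * k - 1"
    and "multigraph V E ends"
    and "int (card E) = int k * int (card V) - int l"
  shows "sparse k 0 V E ends \<longleftrightarrow>
    (\<exists>g :: nat \<Rightarrow> 'v uprod. (\<forall>i<l. set_uprod (g i) \<subseteq> V) \<and>
       is_kmap k V (Inl ` E \<union> Inr ` {..<l}) (case_sum ends g))"
  using sparse_kmap[OF assms(3) _ assms(4)] kmap_sparse[OF assms(3)] by blast

end
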